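(* Let $\varphi:\mathbb R^d\to\mathbb R\cup\{+\infty\}$ be proper, convex, lsc and satisfy property (X) with some constant $D>0$. Let $C>0$ and $\alpha_0>0$. For $i=1,2$ let $\zeta_i\in W^{1,\infty}(0,\infty)^d$ solve $\alpha_i(t)\dot\zeta_i+\partial\varphi(\zeta_i)\ni g_i(t)$ a.e., $\zeta_i(0)=\zeta_{0i}$, with $\zeta_{0i}\in\mathcal D_C(\varphi)$, $\alpha_i\in L^\infty_{loc}(0,\infty)$, $\alpha_i\ge\alpha_0$ a.e., $g_i\in L^\infty(0,\infty)^d$, $|g_i(t)|\le C$ a.e. Then there exists a constant $L$ (depending on $C$ and $D$) such that for every $t\in(0,\infty)$ $$|\zeta_1-\zeta_2|(t)\le|\zeta_{01}-\zeta_{02}|+L\int_0^t\Big(\Big|\frac1{\alpha_1}-\frac1{\alpha_2}\Big|+|g_1-g_2|\Big)d\tau.$$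
   Context: $\mathcal D_C(\varphi)=\{\chi\in\mathrm{dom}\,\varphi:\exists\xi\in\partial\varphi(\chi),|\xi|\le C\}$. Property (X) with constant $D$: for every $C>0$, every $\zeta_0\in\mathcal D_C(\varphi)$, every $\alpha\in L^\infty_{loc}(0,\infty)$ with $\alpha\ge\alpha_0>0$ a.e. (some $\alpha_0$), and every $g\in L^\infty(0,\infty)^d$ with $|g|\le C$ a.e., the solution $\zeta\in W^{1,1}_{loc}(0,\infty)^d$ of $\alpha\zeta_t+\partial\varphi(\zeta)\ni g$ a.e., $\zeta(0)=\zeta_0$, satisfies $|g(t)-\alpha(t)\zeta_t(t)|\le DC$ a.e. *)

theory Defs
  imports "HOL-Analysis.Analysis"
begin

text \<open>Functions phi : R^d -> R \<union> {+infinity}, modelled as 'a => ereal on a Euclidean space.\<close>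

definition proper_fun :: "('a \<Rightarrow> ereal) \<Rightarrow> bool" where
  "proper_fun \<phi> \<longleftrightarrow> (\<exists>x. \<phi> x < \<infinity>) \<and> (\<forall>x. \<phi> x > -\<infinity>)"

definition convex_fun :: "('a::real_vector \<Rightarrow> ereal) \<Rightarrow> bool" where
  "convex_fun \<phi> \<longleftrightarrow> (\<forall>x y. \<forall>t::real. 0 \<le> t \<and> t \<le> 1 \<longrightarrow>
      \<phi> ((1 - t) *\<^sub>R x + t *\<^sub>R y) \<le> ereal (1 - t) * \<phi> x + ereal t * \<phi> y)"

definition lsc_fun :: "('a::topological_space \<Rightarrow> ereal) \<Rightarrow> bool" where
  "lsc_fun \<phi> \<longleftrightarrow> (\<forall>x. \<phi> x \<le> Liminf (at x) \<phi>)"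

definition dom_fun :: "('a \<Rightarrow> ereal) \<Rightarrow> 'a set" where
  "dom_fun \<phi> = {x. \<phi> x < \<infinity>}"

definition subdiff :: "('a::real_inner \<Rightarrow> ereal) \<Rightarrow> 'a \<Rightarrow> 'a set" where
  "subdiff \<phi> x = {\<xi>. x \<in> dom_fun \<phi> \<and> (\<forall>y. \<phi> x + ereal (\<xi> \<bullet> (y - x)) \<le> \<phi> y)}"

definition DC_set :: "('a::euclidean_space \<Rightarrow> ereal) \<Rightarrow> real \<Rightarrow> 'a set" where
  "DC_set \<phi> C = {x \<in> dom_fun \<phi>. \<exists>\<xi>\<in>subdiff \<phi> x. norm \<xi> \<le> C}"

definition Linf_loc :: "(real \<Rightarrow> real) \<Rightarrow> bool" where
  "Linf_loc \<alpha> \<longleftrightarrow> set_borel_measurable lborel {0<..} \<alpha> \<and>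
     (\<forall>T>0. \<exists>M. AE t in lborel. t \<in> {0<..T} \<longrightarrow> \<bar>\<alpha> t\<bar> \<le> M)"

text \<open>zeta in W^{1,1}_loc(0,infinity)^d with weak derivative v in L^1_loc, and zeta is a solution of
  alpha zeta_t + \<partial>phi(zeta) \<ni> g a.e., zeta(0) = zeta0 (zeta_t represented by v).\<close>
definition is_solution :: "('a::euclidean_space \<Rightarrow> ereal) \<Rightarrow> (real \<Rightarrow> real) \<Rightarrow> (real \<Rightarrow> 'a)
    \<Rightarrow> 'a \<Rightarrow> (real \<Rightarrow> 'a) \<Rightarrow> (real \<Rightarrow> 'a) \<Rightarrow> bool" where
  "is_solution \<phi> \<alpha> g \<zeta>0 \<zeta> v \<longleftrightarrow>
     \<zeta> 0 = \<zeta>0 \<and>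
     (\<forall>T>0. set_integrable lborel {0..T} v) \<and>
     (\<forall>t\<ge>0. \<zeta> t = \<zeta> 0 + (LINT s:{0..t}|lborel. v s)) \<and>
     (AE t in lborel. t > 0 \<longrightarrow> g t - \<alpha> t *\<^sub>R v t \<in> subdiff \<phi> (\<zeta> t))"

definition property_X :: "('a::euclidean_space \<Rightarrow> ereal) \<Rightarrow> real \<Rightarrow> bool" where
  "property_X \<phi> D \<longleftrightarrow>
    (\<forall>C>0. \<forall>\<zeta>0 \<in> DC_set \<phi> C. \<forall>\<alpha> g \<alpha>0 \<zeta> v.
       \<alpha>0 > 0 \<and> Linf_loc \<alpha> \<and> (AE t in lborel. t > 0 \<longrightarrow> \<alpha> t \<ge> \<alpha>0) \<and>
       set_borel_measurable lborel {0<..} g \<and> (AE t in lborel. t > 0 \<longrightarrow> norm (g t) \<le> C) \<and>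
       is_solution \<phi> \<alpha> g \<zeta>0 \<zeta> v
       \<longrightarrow> (AE t in lborel. t > 0 \<longrightarrow> norm (g t - \<alpha> t *\<^sub>R v t) \<le> D * C))"

text \<open>W^{1,infinity}(0,infinity)^d: bounded and Lipschitz on [0,infinity) (continuous representative).\<close>
definition W1inf :: "(real \<Rightarrow> 'a::euclidean_space) \<Rightarrow> bool" where
  "W1inf \<zeta> \<longleftrightarrow> bounded (\<zeta> ` {0..}) \<and> (\<exists>K. K-lipschitz_on {0..} \<zeta>)"

end

theory Submission
  imports Defs
begin

lemma integral_le_negl:
  fixes f g :: "real \<Rightarrow> real"
  assumes "f integrable_on S" "g integrable_on S" "negligible N" "\<And>x. x \<in> S - N \<Longrightarrow> f x \<le> g x"
  shows "integral S f \<le> integral S g"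
proof -
  have e1: "integral S f = integral S (\<lambda>x. if x \<in> N then 0 else f x)"
    by (rule integral_spike[OF assms(3)]) auto
  have e2: "integral S g = integral S (\<lambda>x. if x \<in> N then 0 else g x)"
    by (rule integral_spike[OF assms(3)]) auto
  have i1: "(\<lambda>x. if x \<in> N then 0 else f x) integrable_on S"
    by (rule integrable_spike[OF assms(1) assms(3)]) auto
  have i2: "(\<lambda>x. if x \<in> N then 0 else g x) integrable_on S"
    by (rule integrable_spike[OF assms(2) assms(3)]) auto
  show ?thesis unfolding e1 e2
    by (rule integral_le[OF i1 i2]) (use assms(4) in auto)
qed

lemma le_limit_n:
  fixes X Y A :: real
  assumes "A \<ge> 0" "\<And>n::nat. n > 0 \<Longrightarrow> X \<le> Y + A / real n"
  shows "X \<le> Y"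
proof (rule ccontr)
  assume "\<not> X \<le> Y"
  then have d: "X - Y > 0" by simp
  obtain n :: nat where n: "A / (X - Y) < real n" using reals_Archimedean2 by blast
  have np: "n > 0" using n assms(1) d by (metis divide_nonneg_pos not_gr0 not_less of_nat_0)
  have "A < real n * (X - Y)" using n d by (simp add: pos_divide_less_eq mult.commute)
  then have "A / real n < X - Y" using np by (simp add: divide_less_eq mult.commute)
  with assms(2)[OF np] show False by simp
qed

lemma core:
  fixes w V :: "real \<Rightarrow> 'a::euclidean_space" and h :: "real \<Rightarrow> real"
  assumes N: "negligible N"
  and K: "K \<ge> 0" "\<And>x y. x \<ge> 0 \<Longrightarrow> y \<ge> 0 \<Longrightarrow> norm (w x - w y) \<le> K * \<bar>x - y\<bar>"
  and Vint: "\<And>s t. 0 \<le> s \<Longrightarrow> s \<le> t \<Longrightarrow> V integrable_on {s..t}"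
  and Vw: "\<And>s t. 0 \<le> s \<Longrightarrow> s \<le> t \<Longrightarrow> w t - w s = integral {s..t} V"
  and hint: "\<And>t. h integrable_on {0..t}"
  and hnn: "\<And>x. 0 \<le> h x"
  and M: "M \<ge> 0" "Hm \<ge> 0"
  and pw: "\<And>x. x > 0 \<Longrightarrow> x \<notin> N \<Longrightarrow> V x \<bullet> w x \<le> norm (w x) * h x \<and> norm (V x) \<le> M \<and> h x \<le> Hm"
  and t: "t \<ge> 0"
  shows "norm (w t) \<le> norm (w 0) + integral {0..t} h"
proof -
  define c where "c = K * Hm + 2 * M * K"
  have c0: "c \<ge> 0" unfolding c_def using K M by simp
  have step1: "norm (w t)^2 - norm (w s)^2 \<le> (norm (w s) + norm (w t)) * integral {s..t} h + c * (t-s)^2"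
    if st: "0 \<le> s" "s \<le> t" for s t
  proof -
    define d where "d = w t + w s"
    have e1: "norm (w t)^2 - norm (w s)^2 = (w t - w s) \<bullet> d"
      by (simp add: d_def power2_norm_eq_inner inner_add_right inner_diff_left inner_diff_right inner_commute)
    have e2: "(w t - w s) \<bullet> d = integral {s..t} (\<lambda>\<tau>. V \<tau> \<bullet> d)"
      using integral_linear[OF Vint[OF st] bounded_linear_inner_left[of d]] Vw[OF st] by (simp add: o_def)
    define B where "B = (\<lambda>\<tau>. (norm (w s) + norm (w t)) * h \<tau> + c * (t - s))"
    have int1: "(\<lambda>\<tau>. V \<tau> \<bullet> d) integrable_on {s..t}"
      using integrable_linear[OF Vint[OF st] bounded_linear_inner_left[of d]] by (simp add: o_def)
    have hint2: "h integrable_on {s..t}"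
      by (rule integrable_subinterval_real[OF hint[of t]]) (use st in auto)
    have int2: "B integrable_on {s..t}" unfolding B_def
      by (intro integrable_add integrable_on_mult_right hint2 integrable_const_ivl)
    have pt: "V \<tau> \<bullet> d \<le> B \<tau>" if \<tau>: "\<tau> \<in> {s..t} - (N \<union> {0})" for \<tau>
    proof -
      have tp: "\<tau> > 0" "\<tau> \<notin> N" "s \<le> \<tau>" "\<tau> \<le> t" using \<tau> st by auto
      note P = pw[OF tp(1,2)]
      have a: "V \<tau> \<bullet> w \<tau> \<le> norm (w \<tau>) * h \<tau>" and b: "norm (V \<tau>) \<le> M" and hb: "h \<tau> \<le> Hm"
        using P by auto
      have l1: "norm (w \<tau> - w s) \<le> K * (\<tau> - s)" using K(2)[of \<tau> s] tp st by simp
      have l2: "norm (w t - w \<tau>) \<le> K * (t - \<tau>)" using K(2)[of t \<tau>] tp st by simp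
      have n1: "2 * norm (w \<tau>) \<le> norm (w s) + norm (w t) + K * (t - s)"
        using norm_triangle_sub[of "w \<tau>" "w s"] norm_triangle_sub[of "w \<tau>" "w t"] l1 l2
          norm_minus_commute[of "w \<tau>" "w t"] by (simp add: algebra_simps)
      have dd: "d - 2 *\<^sub>R w \<tau> = (w t - w \<tau>) - (w \<tau> - w s)"
        by (simp add: d_def algebra_simps scaleR_2)
      have n2: "norm (d - 2 *\<^sub>R w \<tau>) \<le> K * (t - s)"
        unfolding dd using norm_triangle_ineq4[of "w t - w \<tau>" "w \<tau> - w s"] l1 l2
        by (simp add: algebra_simps)
      have sp: "V \<tau> \<bullet> d = 2 * (V \<tau> \<bullet> w \<tau>) + V \<tau> \<bullet> (d - 2 *\<^sub>R w \<tau>)"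
        by (simp add: inner_diff_right)
      have r1: "V \<tau> \<bullet> (d - 2 *\<^sub>R w \<tau>) \<le> M * (K * (t - s))"
        using norm_cauchy_schwarz[of "V \<tau>" "d - 2 *\<^sub>R w \<tau>"]
          mult_mono[OF b n2 M(1) norm_ge_zero] by linarith
      have r2: "2 * norm (w \<tau>) * h \<tau> \<le> (norm (w s) + norm (w t) + K * (t - s)) * h \<tau>"
        using mult_right_mono[OF n1 hnn[of \<tau>]] by simp
      have r3: "K * (t - s) * h \<tau> \<le> K * (t - s) * Hm"
        using mult_left_mono[OF hb] K(1) st by simp
      have "V \<tau> \<bullet> d \<le> (norm (w s) + norm (w t)) * h \<tau> + (K * Hm + M * K) * (t - s)"
        using sp a r1 r2 r3 by (simp add: algebra_simps)
      also have "\<dots> \<le> B \<tau>" unfolding B_def c_def using M K st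
        by (intro add_left_mono mult_right_mono) (auto intro: mult_nonneg_nonneg)
      finally show ?thesis .
    qed
    have "integral {s..t} (\<lambda>\<tau>. V \<tau> \<bullet> d) \<le> integral {s..t} B"
      using integral_le_negl[OF int1 int2, of "N \<union> {0}"] pt N by simp
    also have "integral {s..t} B = (norm (w s) + norm (w t)) * integral {s..t} h + c * (t - s)^2"
    proof -
      have "integral {s..t} B = integral {s..t} (\<lambda>\<tau>. (norm (w s) + norm (w t)) * h \<tau>) + integral {s..t} (\<lambda>\<tau>. c * (t - s))"
        unfolding B_def by (rule integral_add) (auto intro: integrable_on_mult_right hint2)
      then show ?thesis using st by (simp add: power2_eq_square)
    qed
    finally show ?thesis using e1 e2 by simp
  qed
  have final: "norm (w t) \<le> norm (w 0) + integral {0..t} h + \<epsilon>" if ep: "\<epsilon> > 0" for \<epsilon>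
  proof -
    define u where "u = (\<lambda>x. sqrt ((norm (w x))^2 + \<epsilon>^2))"
    have uge: "u x \<ge> norm (w x)" "u x \<ge> \<epsilon>" for x
    proof -
      have "sqrt ((norm (w x))^2) \<le> u x" unfolding u_def by (rule real_sqrt_le_mono) simp
      then show "u x \<ge> norm (w x)" by simp
      have "sqrt (\<epsilon>^2) \<le> u x" unfolding u_def by (rule real_sqrt_le_mono) simp
      then show "u x \<ge> \<epsilon>" using ep by simp
    qed
    have usq: "(u x)^2 = (norm (w x))^2 + \<epsilon>^2" for x
      unfolding u_def by (simp add: add_nonneg_nonneg)
    have step2: "u t - u s \<le> integral {s..t} h + c * (t-s)^2 / (2*\<epsilon>)"
      if st: "0 \<le> s" "s \<le> t" for s t
    proof -
      define I where "I = integral {s..t} h"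
      have hint2: "h integrable_on {s..t}"
        by (rule integrable_subinterval_real[OF hint[of t]]) (use st in auto)
      have I0: "I \<ge> 0" unfolding I_def by (rule integral_nonneg[OF hint2 hnn])
      define P where "P = u s + u t"
      define Q where "Q = c * (t-s)^2"
      have Q0: "Q \<ge> 0" unfolding Q_def using c0 by simp
      have P2: "P \<ge> 2*\<epsilon>" unfolding P_def using uge[of s] uge[of t] by simp
      have Pp: "P > 0" using P2 ep by simp
      have "(u t - u s) * P = (u t)^2 - (u s)^2" unfolding P_def by (simp add: algebra_simps power2_eq_square)
      also have "\<dots> = norm (w t)^2 - norm (w s)^2" by (simp add: usq)
      also have "\<dots> \<le> (norm (w s) + norm (w t)) * I + Q" unfolding I_def Q_def by (rule step1[OF st])
      also have "\<dots> \<le> P * I + Q" unfolding P_def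
        using mult_right_mono[OF add_mono[OF uge(1)[of s] uge(1)[of t]] I0] by simp
      finally have "(u t - u s) * P \<le> P * I + Q" .
      then have "u t - u s \<le> (P * I + Q) / P" using Pp by (simp add: pos_le_divide_eq)
      also have "\<dots> = I + Q / P" using Pp by (simp add: field_simps)
      also have "Q / P \<le> Q / (2*\<epsilon>)" using Q0 P2 ep by (intro divide_left_mono) auto
      finally show ?thesis unfolding I_def Q_def by simp
    qed
    have step3: "u t - u 0 \<le> integral {0..t} h + (c * t^2 / (2*\<epsilon>)) / real n" if n: "n > 0" for n :: nat
    proof -
      define \<delta> where "\<delta> = t / real n"
      have d0: "\<delta> \<ge> 0" unfolding \<delta>_def using t by simp
      define X where "X = c * \<delta>^2 / (2*\<epsilon>)"
      have ind: "u (real k * \<delta>) - u 0 \<le> integral {0..real k * \<delta>} h + real k * X" for k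
      proof (induction k)
        case 0
        then show ?case by simp
      next
        case (Suc k)
        define a where "a = real k * \<delta>"
        define b where "b = real (Suc k) * \<delta>"
        have ab: "0 \<le> a" "a \<le> b" "b - a = \<delta>" unfolding a_def b_def using d0 by (auto simp: algebra_simps)
        have comb: "integral {0..a} h + integral {a..b} h = integral {0..b} h"
          using Henstock_Kurzweil_Integration.integral_combine[of 0 a b h] ab hint by auto
        have s2: "u b - u a \<le> integral {a..b} h + X" unfolding X_def using step2[of a b] ab(1,2) unfolding ab(3) by simp
        have ih: "u a - u 0 \<le> integral {0..a} h + real k * X" using Suc.IH unfolding a_def .
        have sk: "real (Suc k) * X = real k * X + X" by (simp add: distrib_right)
        have "u b - u 0 \<le> integral {0..b} h + real (Suc k) * X"
          unfolding sk comb[symmetric] using s2 ih by linarith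
        then show ?case unfolding b_def .
      qed
      have nd: "real n * \<delta> = t" unfolding \<delta>_def using n by simp
      have rnX: "real n * X = (c * t^2 / (2*\<epsilon>)) / real n"
        unfolding X_def \<delta>_def using n by (simp add: field_simps power2_eq_square)
      show ?thesis using ind[of n] unfolding nd rnX .
    qed
    have "u t - u 0 \<le> integral {0..t} h"
    proof -
      have A0: "0 \<le> c * t^2 / (2*\<epsilon>)" using c0 ep by simp
      show ?thesis by (rule le_limit_n[OF A0 step3])
    qed
    moreover have "u 0 \<le> norm (w 0) + \<epsilon>"
    proof -
      have "0 \<le> 2 * norm (w 0) * \<epsilon>" using ep by simp
      then have "(u 0)^2 \<le> (norm (w 0) + \<epsilon>)^2" unfolding usq power2_sum by linarith
      then show ?thesis by (rule power2_le_imp_le) (use ep in simp)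
    qed
    ultimately show ?thesis using uge(1)[of t] by simp
  qed
  show ?thesis by (rule field_le_epsilon) (use final in \<open>simp add: add.assoc\<close>)
qed


lemma subdiff_mono:
  fixes \<phi> :: "'a::euclidean_space \<Rightarrow> ereal"
  assumes "proper_fun \<phi>" "\<xi>1 \<in> subdiff \<phi> x1" "\<xi>2 \<in> subdiff \<phi> x2"
  shows "(\<xi>1 - \<xi>2) \<bullet> (x1 - x2) \<ge> 0"
proof -
  have d: "\<phi> x1 < \<infinity>" "\<phi> x2 < \<infinity>" "\<phi> x1 > -\<infinity>" "\<phi> x2 > -\<infinity>"
    and i1: "\<phi> x1 + ereal (\<xi>1 \<bullet> (x2 - x1)) \<le> \<phi> x2"
    and i2: "\<phi> x2 + ereal (\<xi>2 \<bullet> (x1 - x2)) \<le> \<phi> x1"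
    using assms unfolding subdiff_def dom_fun_def proper_fun_def by auto
  obtain r1 where r1: "\<phi> x1 = ereal r1" using d(1,3) by (cases "\<phi> x1") auto
  obtain r2 where r2: "\<phi> x2 = ereal r2" using d(2,4) by (cases "\<phi> x2") auto
  have "r1 + \<xi>1 \<bullet> (x2 - x1) \<le> r2" using i1 unfolding r1 r2 by simp
  moreover have "r2 + \<xi>2 \<bullet> (x1 - x2) \<le> r1" using i2 unfolding r1 r2 by simp
  moreover have "(\<xi>1 - \<xi>2) \<bullet> (x1 - x2) = - (\<xi>1 \<bullet> (x2 - x1)) - \<xi>2 \<bullet> (x1 - x2)"
    by (simp add: inner_diff_left inner_diff_right)
  ultimately show ?thesis by linarith
qed

lemma pointwise:
  fixes a1 a2 \<alpha>0 C D L :: real and g1 g2 v1 v2 x1 x2 :: "'a::euclidean_space"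
  assumes a0: "\<alpha>0 > 0" and a: "a1 \<ge> \<alpha>0" "a2 \<ge> \<alpha>0"
    and g: "norm g1 \<le> C" "norm g2 \<le> C"
    and x: "norm (g1 - a1 *\<^sub>R v1) \<le> D * C" "norm (g2 - a2 *\<^sub>R v2) \<le> D * C"
    and mono: "((g1 - a1 *\<^sub>R v1) - (g2 - a2 *\<^sub>R v2)) \<bullet> (x1 - x2) \<ge> 0"
    and L: "L = max (C + D * C) (1 / \<alpha>0)"
  shows "(v1 - v2) \<bullet> (x1 - x2) \<le> norm (x1 - x2) * (L * (\<bar>1 / a1 - 1 / a2\<bar> + norm (g1 - g2)))"
    "norm (v1 - v2) \<le> 2 * ((C + D * C) / \<alpha>0)"
    "L * (\<bar>1 / a1 - 1 / a2\<bar> + norm (g1 - g2)) \<le> L * (2 / \<alpha>0 + 2 * C)"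
proof -
  define \<xi>1 where "\<xi>1 = g1 - a1 *\<^sub>R v1"
  define \<xi>2 where "\<xi>2 = g2 - a2 *\<^sub>R v2"
  define W where "W = x1 - x2"
  have a1p: "a1 > 0" and a2p: "a2 > 0" using a a0 by auto
  have L1: "C + D * C \<le> L" and L2: "1 / \<alpha>0 \<le> L" unfolding L by auto
  have L0: "L \<ge> 0" using L2 a0 by (meson order.trans less_imp_le zero_less_divide_1_iff)
  have n1: "norm (a1 *\<^sub>R v1) \<le> C + D * C"
  proof -
    have "a1 *\<^sub>R v1 = g1 - \<xi>1" unfolding \<xi>1_def by simp
    then have "norm (a1 *\<^sub>R v1) \<le> norm g1 + norm \<xi>1" by (metis norm_triangle_ineq4)
    then show ?thesis using g x unfolding \<xi>1_def by linarith
  qed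
  have n2: "norm (a2 *\<^sub>R v2) \<le> C + D * C"
  proof -
    have "a2 *\<^sub>R v2 = g2 - \<xi>2" unfolding \<xi>2_def by simp
    then have "norm (a2 *\<^sub>R v2) \<le> norm g2 + norm \<xi>2" by (metis norm_triangle_ineq4)
    then show ?thesis using g x unfolding \<xi>2_def by linarith
  qed
  have e1: "v1 - v2 = (1/a1 - 1/a2) *\<^sub>R (a1 *\<^sub>R v1) + (1/a2) *\<^sub>R ((g1 - g2) - (\<xi>1 - \<xi>2))"
    using a1p a2p unfolding \<xi>1_def \<xi>2_def by (simp add: algebra_simps)
  have e2: "(v1 - v2) \<bullet> W = (1/a1 - 1/a2) * ((a1 *\<^sub>R v1) \<bullet> W) + (1/a2) * ((g1 - g2) \<bullet> W) - (1/a2) * ((\<xi>1 - \<xi>2) \<bullet> W)"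
    unfolding e1 by (simp add: inner_add_left inner_diff_left algebra_simps)
  have t1: "(1/a1 - 1/a2) * ((a1 *\<^sub>R v1) \<bullet> W) \<le> \<bar>1/a1 - 1/a2\<bar> * ((C + D * C) * norm W)"
  proof -
    have "\<bar>(a1 *\<^sub>R v1) \<bullet> W\<bar> \<le> norm (a1 *\<^sub>R v1) * norm W" by (rule Cauchy_Schwarz_ineq2)
    also have "\<dots> \<le> (C + D * C) * norm W" by (rule mult_right_mono[OF n1 norm_ge_zero])
    finally have "\<bar>(a1 *\<^sub>R v1) \<bullet> W\<bar> \<le> (C + D * C) * norm W" .
    then have "\<bar>(1/a1 - 1/a2) * ((a1 *\<^sub>R v1) \<bullet> W)\<bar> \<le> \<bar>1/a1 - 1/a2\<bar> * ((C + D * C) * norm W)"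
      by (simp add: abs_mult mult_left_mono)
    then show ?thesis by linarith
  qed
  have t2: "(1/a2) * ((g1 - g2) \<bullet> W) \<le> (1/\<alpha>0) * (norm (g1 - g2) * norm W)"
  proof -
    have "(g1 - g2) \<bullet> W \<le> norm (g1 - g2) * norm W" by (rule norm_cauchy_schwarz)
    then have "(1/a2) * ((g1 - g2) \<bullet> W) \<le> (1/a2) * (norm (g1 - g2) * norm W)"
      using a2p by (intro mult_left_mono) auto
    also have "\<dots> \<le> (1/\<alpha>0) * (norm (g1 - g2) * norm W)"
      by (rule mult_right_mono) (use a a0 in \<open>auto intro: divide_left_mono\<close>)
    finally show ?thesis .
  qed
  have t3: "(1/a2) * ((\<xi>1 - \<xi>2) \<bullet> W) \<ge> 0" using mono a2p unfolding \<xi>1_def \<xi>2_def W_def by simp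
  have t1': "\<bar>1/a1 - 1/a2\<bar> * ((C + D * C) * norm W) \<le> \<bar>1/a1 - 1/a2\<bar> * (L * norm W)"
    by (intro mult_left_mono mult_right_mono L1) auto
  have t2': "(1/\<alpha>0) * (norm (g1 - g2) * norm W) \<le> L * (norm (g1 - g2) * norm W)"
    by (intro mult_right_mono L2) auto
  have "(v1 - v2) \<bullet> W \<le> \<bar>1/a1 - 1/a2\<bar> * (L * norm W) + L * (norm (g1 - g2) * norm W)"
    using e2 t1 t2 t3 t1' t2' by linarith
  also have "\<dots> = norm W * (L * (\<bar>1 / a1 - 1 / a2\<bar> + norm (g1 - g2)))" by (simp add: algebra_simps)
  finally show "(v1 - v2) \<bullet> (x1 - x2) \<le> norm (x1 - x2) * (L * (\<bar>1 / a1 - 1 / a2\<bar> + norm (g1 - g2)))"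
    unfolding W_def .
  have nv1: "norm v1 \<le> (C + D * C) / \<alpha>0"
  proof -
    have "a1 * norm v1 \<le> C + D * C" using n1 a1p by simp
    then have "\<alpha>0 * norm v1 \<le> C + D * C" using a(1) by (meson mult_right_mono norm_ge_zero order.trans)
    then show ?thesis using a0 by (simp add: pos_le_divide_eq mult.commute)
  qed
  have nv2: "norm v2 \<le> (C + D * C) / \<alpha>0"
  proof -
    have "a2 * norm v2 \<le> C + D * C" using n2 a2p by simp
    then have "\<alpha>0 * norm v2 \<le> C + D * C" using a(2) by (meson mult_right_mono norm_ge_zero order.trans)
    then show ?thesis using a0 by (simp add: pos_le_divide_eq mult.commute)
  qed
  show "norm (v1 - v2) \<le> 2 * ((C + D * C) / \<alpha>0)"
  proof -
    show ?thesis unfolding mult_2 by (rule order_trans[OF norm_triangle_ineq4[of v1 v2] add_mono[OF nv1 nv2]])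
  qed
  have i1: "1/a1 \<le> 1/\<alpha>0" "1/a2 \<le> 1/\<alpha>0" using a a0 by (auto intro: divide_left_mono)
  have "\<bar>1 / a1 - 1 / a2\<bar> \<le> 2 / \<alpha>0"
  proof -
    have p: "0 \<le> 1/a1" "0 \<le> 1/a2" using a1p a2p by auto
    have "2 / \<alpha>0 = 1/\<alpha>0 + 1/\<alpha>0" by simp
    then show ?thesis using i1 p unfolding abs_le_iff by linarith
  qed
  moreover have "norm (g1 - g2) \<le> 2 * C" using norm_triangle_ineq4[of g1 g2] g by simp
  ultimately show "L * (\<bar>1 / a1 - 1 / a2\<bar> + norm (g1 - g2)) \<le> L * (2 / \<alpha>0 + 2 * C)"
    using L0 by (intro mult_left_mono) auto
qed


lemma kbound:
  fixes a1 a2 \<alpha>0 C :: real and g1 g2 :: "'a::euclidean_space"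
  assumes a0: "\<alpha>0 > 0" and a: "a1 \<ge> \<alpha>0" "a2 \<ge> \<alpha>0"
    and g: "norm g1 \<le> C" "norm g2 \<le> C"
  shows "\<bar>1 / a1 - 1 / a2\<bar> + norm (g1 - g2) \<le> 2 / \<alpha>0 + 2 * C"
proof -
  have a1p: "a1 > 0" and a2p: "a2 > 0" using a a0 by auto
  have i1: "1/a1 \<le> 1/\<alpha>0" "1/a2 \<le> 1/\<alpha>0" using a a0 by (auto intro: divide_left_mono)
  have "\<bar>1 / a1 - 1 / a2\<bar> \<le> 2 / \<alpha>0"
  proof -
    have p: "0 \<le> 1/a1" "0 \<le> 1/a2" using a1p a2p by auto
    have "2 / \<alpha>0 = 1/\<alpha>0 + 1/\<alpha>0" by simp
    then show ?thesis using i1 p unfolding abs_le_iff by linarith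
  qed
  moreover have "norm (g1 - g2) \<le> 2 * C" using norm_triangle_ineq4[of g1 g2] g by simp
  ultimately show ?thesis by linarith
qed

lemma sol_HK:
  fixes v \<zeta> :: "real \<Rightarrow> 'a::euclidean_space"
  assumes si: "\<forall>T>0. set_integrable lborel {0..T} v"
    and sr: "\<forall>t\<ge>0. \<zeta> t = \<zeta> 0 + (LINT s:{0..t}|lborel. v s)"
  shows "\<And>s t. 0 \<le> s \<Longrightarrow> s \<le> t \<Longrightarrow> v integrable_on {s..t}"
    and "\<And>s t. 0 \<le> s \<Longrightarrow> s \<le> t \<Longrightarrow> \<zeta> t - \<zeta> s = integral {s..t} v"
proof -
  have si': "set_integrable lborel {0..t} v" if "t \<ge> 0" for t
    by (rule set_integrable_subset[OF si[rule_format, of "t+1"]]) (use that in auto)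
  have int0: "v integrable_on {0..t}" if "t \<ge> 0" for t
    using set_borel_integral_eq_integral(1)[OF si'[OF that]] .
  have eq0: "\<zeta> t = \<zeta> 0 + integral {0..t} v" if "t \<ge> 0" for t
    using sr[rule_format, OF that] set_borel_integral_eq_integral(2)[OF si'[OF that]] by metis
  show "v integrable_on {s..t}" if "0 \<le> s" "s \<le> t" for s t
    by (rule integrable_subinterval_real[OF int0[of t]]) (use that in auto)
  show "\<zeta> t - \<zeta> s = integral {s..t} v" if "0 \<le> s" "s \<le> t" for s t
  proof -
    have "integral {0..s} v + integral {s..t} v = integral {0..t} v"
      by (rule Henstock_Kurzweil_Integration.integral_combine) (use that int0 in auto)
    then show ?thesis using eq0[of s] eq0[of t] that by (simp add: algebra_simps)
  qed
qed

lemma k_integrable: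
  fixes \<alpha>1 \<alpha>2 :: "real \<Rightarrow> real" and g1 g2 :: "real \<Rightarrow> 'a::euclidean_space"
  assumes a0: "\<alpha>0 > 0" and C: "C > 0"
    and La1: "Linf_loc \<alpha>1" and La2: "Linf_loc \<alpha>2"
    and a1: "AE t in lborel. t > 0 \<longrightarrow> \<alpha>1 t \<ge> \<alpha>0" and a2: "AE t in lborel. t > 0 \<longrightarrow> \<alpha>2 t \<ge> \<alpha>0"
    and mg1: "set_borel_measurable lborel {0<..} g1" and mg2: "set_borel_measurable lborel {0<..} g2"
    and bg1: "AE t in lborel. t > 0 \<longrightarrow> norm (g1 t) \<le> C" and bg2: "AE t in lborel. t > 0 \<longrightarrow> norm (g2 t) \<le> C"
    and T: "T > 0"
  shows "set_integrable lborel {0..T} (\<lambda>\<tau>. \<bar>1 / \<alpha>1 \<tau> - 1 / \<alpha>2 \<tau>\<bar> + norm (g1 \<tau> - g2 \<tau>))"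
proof -
  define k where "k = (\<lambda>\<tau>. \<bar>1 / \<alpha>1 \<tau> - 1 / \<alpha>2 \<tau>\<bar> + norm (g1 \<tau> - g2 \<tau>))"
  define A1 where "A1 = (\<lambda>x. indicator {0<..} x *\<^sub>R \<alpha>1 x)"
  define A2 where "A2 = (\<lambda>x. indicator {0<..} x *\<^sub>R \<alpha>2 x)"
  define G1 where "G1 = (\<lambda>x. indicator {0<..} x *\<^sub>R g1 x)"
  define G2 where "G2 = (\<lambda>x. indicator {0<..} x *\<^sub>R g2 x)"
  have [measurable]: "A1 \<in> borel_measurable lborel" "A2 \<in> borel_measurable lborel"
    "G1 \<in> borel_measurable lborel" "G2 \<in> borel_measurable lborel"
    using La1 La2 mg1 mg2 unfolding Linf_loc_def set_borel_measurable_def A1_def A2_def G1_def G2_def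
    by auto
  define k' where "k' = (\<lambda>x. \<bar>1 / A1 x - 1 / A2 x\<bar> + norm (G1 x - G2 x))"
  have [measurable]: "k' \<in> borel_measurable lborel" unfolding k'_def by measurable
  have feq: "(\<lambda>x. indicator {0..T} x *\<^sub>R k x) = (\<lambda>x. indicator {0<..T} x * k' x + indicator {0} x * k 0)"
  proof (rule ext)
    fix x :: real
    show "indicator {0..T} x *\<^sub>R k x = indicator {0<..T} x * k' x + indicator {0} x * k 0"
    proof (cases "x = 0")
      case True then show ?thesis using T by (simp add: indicator_def)
    next
      case False
      show ?thesis
      proof (cases "0 < x \<and> x \<le> T")
        case True then show ?thesis using False
          by (simp add: indicator_def k_def k'_def A1_def A2_def G1_def G2_def)
      next
        case c2: False then show ?thesis using False by (auto simp: indicator_def)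
      qed
    qed
  qed
  have meas: "(\<lambda>x. indicator {0..T} x *\<^sub>R k x) \<in> borel_measurable lborel"
    unfolding feq by measurable
  define B where "B = 2 / \<alpha>0 + 2 * C"
  have B0: "B \<ge> 0" unfolding B_def using a0 C by simp
  have intB: "integrable lborel (\<lambda>x. indicator {0..T} x * B)"
    by (intro integrable_mult_left integrable_real_indicator) (use T in auto)
  have AEb: "AE x in lborel. norm (indicator {0..T} x *\<^sub>R k x) \<le> norm (indicator {0..T} x * B)"
    using a1 a2 bg1 bg2 AE_lborel_singleton[of 0]
  proof eventually_elim
    case (elim x)
    show ?case
    proof (cases "x \<in> {0..T}")
      case True
      then have xp: "x > 0" using elim(5) by auto
      have "k x \<le> B" unfolding k_def B_def
        by (rule kbound[OF a0]) (use elim xp in auto)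
      moreover have "k x \<ge> 0" unfolding k_def by simp
      ultimately show ?thesis using True B0 by (simp add: indicator_def)
    next
      case False then show ?thesis by (auto simp: indicator_def)
    qed
  qed
  have "integrable lborel (\<lambda>x. indicator {0..T} x *\<^sub>R k x)"
    by (rule Bochner_Integration.integrable_bound[OF intB meas AEb])
  then show ?thesis unfolding set_integrable_def k_def .
qed

lemma main_lemma:
  fixes \<phi> :: "'a::euclidean_space \<Rightarrow> ereal" and \<zeta>1 \<zeta>2 v1 v2 g1 g2 :: "real \<Rightarrow> 'a"
    and \<alpha>1 \<alpha>2 :: "real \<Rightarrow> real" and D C \<alpha>0 :: real
  assumes D: "D > 0" and C: "C > 0" and a0: "\<alpha>0 > 0"
  and prp: "proper_fun \<phi>" and PX: "property_X \<phi> D"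
  and z01: "\<zeta>01 \<in> DC_set \<phi> C" and z02: "\<zeta>02 \<in> DC_set \<phi> C"
  and La1: "Linf_loc \<alpha>1" and La2: "Linf_loc \<alpha>2"
  and a1: "AE t in lborel. t > 0 \<longrightarrow> \<alpha>1 t \<ge> \<alpha>0" and a2: "AE t in lborel. t > 0 \<longrightarrow> \<alpha>2 t \<ge> \<alpha>0"
  and mg1: "set_borel_measurable lborel {0<..} g1" and mg2: "set_borel_measurable lborel {0<..} g2"
  and bg1: "AE t in lborel. t > 0 \<longrightarrow> norm (g1 t) \<le> C" and bg2: "AE t in lborel. t > 0 \<longrightarrow> norm (g2 t) \<le> C"
  and W1: "W1inf \<zeta>1" and W2: "W1inf \<zeta>2"
  and S1: "is_solution \<phi> \<alpha>1 g1 \<zeta>01 \<zeta>1 v1" and S2: "is_solution \<phi> \<alpha>2 g2 \<zeta>02 \<zeta>2 v2"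
  shows "\<forall>t>0. norm (\<zeta>1 t - \<zeta>2 t) \<le> norm (\<zeta>01 - \<zeta>02) +
            max (C + D * C) (1 / \<alpha>0) * (LINT \<tau>:{0..t}|lborel. \<bar>1 / \<alpha>1 \<tau> - 1 / \<alpha>2 \<tau>\<bar> + norm (g1 \<tau> - g2 \<tau>))"
proof (intro allI impI)
  fix t :: real assume tp: "t > 0"
  define L where "L = max (C + D * C) (1 / \<alpha>0)"
  have L0: "L \<ge> 0" unfolding L_def using a0 by (simp add: le_max_iff_disj)
  have PX': "\<forall>C>0. \<forall>\<zeta>0 \<in> DC_set \<phi> C. \<forall>\<alpha> g \<alpha>0 \<zeta> v.
       \<alpha>0 > 0 \<and> Linf_loc \<alpha> \<and> (AE t in lborel. t > 0 \<longrightarrow> \<alpha> t \<ge> \<alpha>0) \<and>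
       set_borel_measurable lborel {0<..} g \<and> (AE t in lborel. t > 0 \<longrightarrow> norm (g t) \<le> C) \<and>
       is_solution \<phi> \<alpha> g \<zeta>0 \<zeta> v
       \<longrightarrow> (AE t in lborel. t > 0 \<longrightarrow> norm (g t - \<alpha> t *\<^sub>R v t) \<le> D * C)"
    using PX unfolding property_X_def .
  have X1: "AE t in lborel. t > 0 \<longrightarrow> norm (g1 t - \<alpha>1 t *\<^sub>R v1 t) \<le> D * C"
    using PX'[rule_format, OF C z01, of \<alpha>0 \<alpha>1 g1 \<zeta>1 v1] a0 La1 a1 mg1 bg1 S1 by blast
  have X2: "AE t in lborel. t > 0 \<longrightarrow> norm (g2 t - \<alpha>2 t *\<^sub>R v2 t) \<le> D * C"
    using PX'[rule_format, OF C z02, of \<alpha>0 \<alpha>2 g2 \<zeta>2 v2] a0 La2 a2 mg2 bg2 S2 by blast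
  have s10: "\<zeta>1 0 = \<zeta>01" and si1: "\<forall>T>0. set_integrable lborel {0..T} v1"
    and sr1: "\<forall>t\<ge>0. \<zeta>1 t = \<zeta>1 0 + (LINT s:{0..t}|lborel. v1 s)"
    and sd1: "AE t in lborel. t > 0 \<longrightarrow> g1 t - \<alpha>1 t *\<^sub>R v1 t \<in> subdiff \<phi> (\<zeta>1 t)"
    using S1 unfolding is_solution_def by blast+
  have s20: "\<zeta>2 0 = \<zeta>02" and si2: "\<forall>T>0. set_integrable lborel {0..T} v2"
    and sr2: "\<forall>t\<ge>0. \<zeta>2 t = \<zeta>2 0 + (LINT s:{0..t}|lborel. v2 s)"
    and sd2: "AE t in lborel. t > 0 \<longrightarrow> g2 t - \<alpha>2 t *\<^sub>R v2 t \<in> subdiff \<phi> (\<zeta>2 t)"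
    using S2 unfolding is_solution_def by blast+
  note H1 = sol_HK[OF si1 sr1] and H2 = sol_HK[OF si2 sr2]
  define w where "w = (\<lambda>x. \<zeta>1 x - \<zeta>2 x)"
  define V where "V = (\<lambda>x. v1 x - v2 x)"
  have Vint: "V integrable_on {s..t'}" if "0 \<le> s" "s \<le> t'" for s t'
    unfolding V_def by (rule integrable_diff[OF H1(1)[OF that] H2(1)[OF that]])
  have Vw: "w t' - w s = integral {s..t'} V" if "0 \<le> s" "s \<le> t'" for s t'
  proof -
    have "integral {s..t'} V = integral {s..t'} v1 - integral {s..t'} v2"
      unfolding V_def by (rule integral_diff[OF H1(1)[OF that] H2(1)[OF that]])
    then show ?thesis using H1(2)[OF that] H2(2)[OF that] unfolding w_def by (simp add: algebra_simps)
  qed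
  obtain K1 where K1: "K1-lipschitz_on {0..} \<zeta>1" using W1 unfolding W1inf_def by auto
  obtain K2 where K2: "K2-lipschitz_on {0..} \<zeta>2" using W2 unfolding W1inf_def by auto
  have K0: "K1 + K2 \<ge> 0" using lipschitz_on_nonneg[OF K1] lipschitz_on_nonneg[OF K2] by simp
  have Kw: "norm (w x - w y) \<le> (K1 + K2) * \<bar>x - y\<bar>" if "x \<ge> 0" "y \<ge> 0" for x y
  proof -
    have "norm (w x - w y) = norm ((\<zeta>1 x - \<zeta>1 y) - (\<zeta>2 x - \<zeta>2 y))" unfolding w_def by (simp add: algebra_simps)
    also have "\<dots> \<le> norm (\<zeta>1 x - \<zeta>1 y) + norm (\<zeta>2 x - \<zeta>2 y)" by (rule norm_triangle_ineq4)
    also have "\<dots> \<le> K1 * \<bar>x - y\<bar> + K2 * \<bar>x - y\<bar>"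
      using lipschitz_onD[OF K1, of x y] lipschitz_onD[OF K2, of x y] that
      by (simp add: dist_norm)
    finally show ?thesis by (simp add: algebra_simps)
  qed
  define k where "k = (\<lambda>\<tau>. \<bar>1 / \<alpha>1 \<tau> - 1 / \<alpha>2 \<tau>\<bar> + norm (g1 \<tau> - g2 \<tau>))"
  define h where "h = (\<lambda>\<tau>. L * k \<tau>)"
  have kI: "set_integrable lborel {0..T} k" if "T > 0" for T
    unfolding k_def by (rule k_integrable[OF a0 C La1 La2 a1 a2 mg1 mg2 bg1 bg2 that])
  have hint: "h integrable_on {0..T}" for T
  proof -
    have "k integrable_on {0..max T 1}" using set_borel_integral_eq_integral(1)[OF kI[of "max T 1"]] by simp
    then have "k integrable_on {0..T}" by (rule integrable_subinterval_real) auto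
    then show ?thesis unfolding h_def by (rule integrable_on_mult_right)
  qed
  have hnn: "0 \<le> h x" for x unfolding h_def k_def using L0 by simp
  have LI: "(LINT \<tau>:{0..t}|lborel. k \<tau>) = integral {0..t} k"
    using set_borel_integral_eq_integral(2)[OF kI[OF tp]] .
  define P where "P = (\<lambda>x. x > 0 \<longrightarrow> (\<alpha>0 \<le> \<alpha>1 x \<and> \<alpha>0 \<le> \<alpha>2 x \<and> norm (g1 x) \<le> C \<and> norm (g2 x) \<le> C \<and>
     g1 x - \<alpha>1 x *\<^sub>R v1 x \<in> subdiff \<phi> (\<zeta>1 x) \<and> g2 x - \<alpha>2 x *\<^sub>R v2 x \<in> subdiff \<phi> (\<zeta>2 x) \<and>
     norm (g1 x - \<alpha>1 x *\<^sub>R v1 x) \<le> D * C \<and> norm (g2 x - \<alpha>2 x *\<^sub>R v2 x) \<le> D * C))"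
  have "AE x in lborel. P x" using a1 a2 bg1 bg2 sd1 sd2 X1 X2
    unfolding P_def by eventually_elim blast
  then obtain N where N: "{x \<in> space lborel. \<not> P x} \<subseteq> N" "emeasure lborel N = 0" "N \<in> sets lborel"
    by (rule AE_E)
  have negN: "negligible N"
  proof -
    have "N \<in> null_sets lborel" using N(2,3) by (simp add: null_sets_def)
    then have "N \<in> null_sets lebesgue" by (rule null_sets_completionI)
    then show ?thesis by (simp add: negligible_iff_null_sets)
  qed
  have pw: "V x \<bullet> w x \<le> norm (w x) * h x \<and> norm (V x) \<le> 2 * ((C + D * C) / \<alpha>0) \<and> h x \<le> L * (2 / \<alpha>0 + 2 * C)"
    if x: "x > 0" "x \<notin> N" for x
  proof -
    have "P x" using N(1) x by auto
    then have p: "\<alpha>0 \<le> \<alpha>1 x" "\<alpha>0 \<le> \<alpha>2 x" "norm (g1 x) \<le> C" "norm (g2 x) \<le> C"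
      "g1 x - \<alpha>1 x *\<^sub>R v1 x \<in> subdiff \<phi> (\<zeta>1 x)" "g2 x - \<alpha>2 x *\<^sub>R v2 x \<in> subdiff \<phi> (\<zeta>2 x)"
      "norm (g1 x - \<alpha>1 x *\<^sub>R v1 x) \<le> D * C" "norm (g2 x - \<alpha>2 x *\<^sub>R v2 x) \<le> D * C"
      unfolding P_def using x by auto
    have mono: "((g1 x - \<alpha>1 x *\<^sub>R v1 x) - (g2 x - \<alpha>2 x *\<^sub>R v2 x)) \<bullet> (\<zeta>1 x - \<zeta>2 x) \<ge> 0"
      by (rule subdiff_mono[OF prp p(5,6)])
    note pt = pointwise[OF a0 p(1-4) p(7,8) mono L_def]
    show ?thesis unfolding V_def w_def h_def k_def using pt by simp
  qed
  have M0: "2 * ((C + D * C) / \<alpha>0) \<ge> 0" using C D a0 by simp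
  have Hm0: "L * (2 / \<alpha>0 + 2 * C) \<ge> 0" using L0 C a0 by simp
  have "norm (w t) \<le> norm (w 0) + integral {0..t} h"
    by (rule core[OF negN K0 Kw Vint Vw hint hnn M0 Hm0 pw]) (use tp in auto)
  moreover have "integral {0..t} h = L * integral {0..t} k" unfolding h_def by simp
  ultimately show "norm (\<zeta>1 t - \<zeta>2 t) \<le> norm (\<zeta>01 - \<zeta>02) + L * (LINT \<tau>:{0..t}|lborel. \<bar>1 / \<alpha>1 \<tau> - 1 / \<alpha>2 \<tau>\<bar> + norm (g1 \<tau> - g2 \<tau>))"
    using LI s10 s20 unfolding w_def k_def by simp
qed

theorem proposition3p4:
  fixes D C \<alpha>0 :: real
  assumes "D > 0" "C > 0" "\<alpha>0 > 0"
  shows "\<exists>L. \<forall>(\<phi> :: 'a::euclidean_space \<Rightarrow> ereal) \<zeta>1 \<zeta>2 v1 v2 \<alpha>1 \<alpha>2 g1 g2 \<zeta>01 \<zeta>02.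
     proper_fun \<phi> \<and> convex_fun \<phi> \<and> lsc_fun \<phi> \<and> property_X \<phi> D \<and>
     \<zeta>01 \<in> DC_set \<phi> C \<and> \<zeta>02 \<in> DC_set \<phi> C \<and>
     Linf_loc \<alpha>1 \<and> Linf_loc \<alpha>2 \<and>
     (AE t in lborel. t > 0 \<longrightarrow> \<alpha>1 t \<ge> \<alpha>0) \<and> (AE t in lborel. t > 0 \<longrightarrow> \<alpha>2 t \<ge> \<alpha>0) \<and>
     set_borel_measurable lborel {0<..} g1 \<and> set_borel_measurable lborel {0<..} g2 \<and>
     (AE t in lborel. t > 0 \<longrightarrow> norm (g1 t) \<le> C) \<and> (AE t in lborel. t > 0 \<longrightarrow> norm (g2 t) \<le> C) \<and>
     W1inf \<zeta>1 \<and> W1inf \<zeta>2 \<and>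
     is_solution \<phi> \<alpha>1 g1 \<zeta>01 \<zeta>1 v1 \<and> is_solution \<phi> \<alpha>2 g2 \<zeta>02 \<zeta>2 v2
     \<longrightarrow> (\<forall>t>0. norm (\<zeta>1 t - \<zeta>2 t) \<le> norm (\<zeta>01 - \<zeta>02) +
            L * (LINT \<tau>:{0..t}|lborel. \<bar>1 / \<alpha>1 \<tau> - 1 / \<alpha>2 \<tau>\<bar> + norm (g1 \<tau> - g2 \<tau>)))"
  apply (rule exI[of _ "max (C + D * C) (1 / \<alpha>0)"])
  apply (intro allI impI)
  apply (elim conjE)
  subgoal for \<phi> \<zeta>1 \<zeta>2 v1 v2 \<alpha>1 \<alpha>2 g1 g2 \<zeta>01 \<zeta>02 t
    apply (rule main_lemma[OF assms, where \<phi>=\<phi> and ?\<zeta>1.0=\<zeta>1 and ?\<zeta>2.0=\<zeta>2 and ?v1.0=v1 and ?v2.0=v2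
      and ?\<alpha>1.0=\<alpha>1 and ?\<alpha>2.0=\<alpha>2 and ?g1.0=g1 and ?g2.0=g2 and ?\<zeta>01.0=\<zeta>01 and ?\<zeta>02.0=\<zeta>02, rule_format])
                     apply assumption+
    done
  done

end
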